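(* Let $D_{-}$ denote the difference operator $D_{-}F(z)=F(z)-F(z-1)$, applied coefficientwise to formal power series in the non-commuting variables $Y_1,Y_2,\ldots$ whose coefficients are meromorphic functions of $z$. Then the generating series $H(z)$ of Hurwitz polyzeta functions satisfies \[ D_{-}H(z)=-\sum_{k=1}^{\infty}\frac{Y_{k}}{(z-1)^{k}}\,H(z), \] i.e. $H(z)=H(z-1)-\sum_{k\ge 1}(z-1)^{-k}Y_kH(z)$ as an identity of formal power series (coefficient by coefficient).
   Context: For integers $k_1,\ldots,k_r\ge 1$ with $k_r\ge 2$, the Hurwitz polyzeta function is the meromorphic function of $z$ \[ \zeta(k_1,\ldots,k_r|z)=\sum_{0\le n_1<n_2<\cdots<n_r}\frac{1}{(z+n_1)^{k_1}\cdots(z+n_r)^{k_r}}. \] Let $\{y_j\}_{j\ge1}$ be non-commuting variables. The stuffle product on ${\mathbb Q}\langle y_1,y_2,\ldots\rangle$ is the bilinear product defined inductively by $1*w=w*1=w$ for the empty word $1$ and $y_kw*y_{k'}w'=y_k(w*y_{k'}w')+y_{k'}(y_kw*w')+y_{k+k'}(w*w')$. To a word $y_{k_1}\cdots y_{k_r}$ with $k_r\ge2$ associate $\zeta(y_{k_1}\cdots y_{k_r}|z):=\zeta(k_1,\ldots,k_r|z)$; set $\zeta(1|z)=\zeta(y_1|z):=-\Gamma'(z)/\Gamma(z)$, $\zeta(\text{empty word}|z)=1$, and extend $w\mapsto\zeta(w|z)$ to all words (in particular to words ending in $y_1$) as the homomorphism from the stuffle algebra to meromorphic functions of $z$ determined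 by these values. Let $\{Y_j\}_{j\ge1}$ be non-commuting formal variables, with $Y_{k_1}\cdots Y_{k_r}$ the word corresponding to $y_{k_1}\cdots y_{k_r}$, and define \[ H(z)=\sum_{w}\zeta(w|z)\,W, \] the sum over all words $w$ in the $y_j$ (including the empty word, with coefficient $1$), $W$ being the corresponding word in the $Y_j$. *)

theory Defs
  imports "HOL-Analysis.Analysis"
begin

text \<open>Words in the letters y_1, y_2, ... are represented as lists of natural numbers
  (the letter y_k is the number k); admissible words have all letters \<ge> 1.\<close>

definition is_word :: "nat list \<Rightarrow> bool" where
  "is_word w \<longleftrightarrow> (\<forall>k\<in>set w. 1 \<le> k)"

definition convergent_word :: "nat list \<Rightarrow> bool" where
  "convergent_word w \<longleftrightarrow> is_word w \<and> w \<noteq> [] \<and> 2 \<le> last w"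

definition hurwitz_polyzeta :: "nat list \<Rightarrow> complex \<Rightarrow> complex" where
  "hurwitz_polyzeta ks z =
     infsum (\<lambda>ns. \<Prod>i<length ks. 1 / (z + of_nat (ns ! i)) ^ (ks ! i))
            {ns :: nat list. length ns = length ks \<and> sorted_wrt (<) ns}"

text \<open>Stuffle product; the formal sum of words is represented as a list of words
  (all coefficients are positive integers, given by multiplicities).\<close>
fun stuffle :: "nat list \<Rightarrow> nat list \<Rightarrow> nat list list" where
  "stuffle [] v = [v]"
| "stuffle u [] = [u]"
| "stuffle (a # u) (b # v) =
     map (Cons a) (stuffle u (b # v)) @ map (Cons b) (stuffle (a # u) v)
     @ map (Cons (a + b)) (stuffle u v)"

definition is_hurwitz_stuffle_hom :: "(nat list \<Rightarrow> complex \<Rightarrow> complex) \<Rightarrow> bool" where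
  "is_hurwitz_stuffle_hom F \<longleftrightarrow>
     (\<forall>z. z \<notin> \<int>\<^sub>\<le>\<^sub>0 \<longrightarrow>
        F [] z = 1 \<and>
        F [1] z = - deriv Gamma z / Gamma z \<and>
        (\<forall>w. convergent_word w \<longrightarrow> F w z = hurwitz_polyzeta w z) \<and>
        (\<forall>u v. is_word u \<longrightarrow> is_word v \<longrightarrow>
            F u z * F v z = (\<Sum>w\<leftarrow>stuffle u v. F w z)))"

text \<open>Formal power series in non-commuting variables Y_1, Y_2, ...: coefficient functions
  on words. Product (concatenation/Cauchy product).\<close>
definition nc_mult :: "(nat list \<Rightarrow> complex) \<Rightarrow> (nat list \<Rightarrow> complex) \<Rightarrow> nat list \<Rightarrow> complex" where
  "nc_mult S T w = (\<Sum>i\<le>length w. S (take i w) * T (drop i w))"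

definition H_series :: "(nat list \<Rightarrow> complex \<Rightarrow> complex) \<Rightarrow> complex \<Rightarrow> nat list \<Rightarrow> complex" where
  "H_series F z w = F w z"

definition Ycoef_series :: "complex \<Rightarrow> nat list \<Rightarrow> complex" where
  "Ycoef_series z w = (case w of [k] \<Rightarrow> if 1 \<le> k then - 1 / (z - 1) ^ k else 0 | _ \<Rightarrow> 0)"

definition D_minus :: "(complex \<Rightarrow> nat list \<Rightarrow> complex) \<Rightarrow> complex \<Rightarrow> nat list \<Rightarrow> complex" where
  "D_minus G z w = G z w - G (z - 1) w"

end

theory Submission
  imports Defs
begin


definition trail :: "nat list \<Rightarrow> nat" where
  "trail w = length (takeWhile (\<lambda>x. x = 1) (rev w))"

lemma trail_snoc1[simp]: "trail (x @ [1]) = Suc (trail x)"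
  by (simp add: trail_def)

lemma trail_le_length: "trail x \<le> length x"
  unfolding trail_def by (metis length_rev length_takeWhile_le)

lemma trail_all1: "\<forall>y\<in>set x. y = 1 \<Longrightarrow> trail x = length x"
  unfolding trail_def by (simp add: takeWhile_eq_all_conv[THEN iffD2])

lemma trail_Cons_not_all: "\<exists>y\<in>set x. y \<noteq> 1 \<Longrightarrow> trail (a # x) = trail x"
  unfolding trail_def by (auto simp: takeWhile_append1)

lemma trail_Cons_ge: "trail x \<le> trail (a # x)"
proof (cases "\<forall>y\<in>set x. y = 1")
  case True
  have "takeWhile (\<lambda>x. x = 1) (rev x @ [a]) = rev x @ takeWhile (\<lambda>x. x = 1) [a]"
    by (rule takeWhile_append2) (use True in auto)
  then have "length (takeWhile (\<lambda>x. x = 1) (rev x @ [a])) \<ge> length x" by simp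
  then have "trail (a # x) \<ge> length x" unfolding trail_def by simp
  then show ?thesis using trail_le_length[of x] by simp
next
  case False
  then show ?thesis using trail_Cons_not_all by simp
qed

lemma stuffle_Nil2[simp]: "stuffle u [] = [u]"
  by (cases u) auto

lemma is_word_Cons: "is_word (a # u) \<longleftrightarrow> 1 \<le> a \<and> is_word u"
  by (simp add: is_word_def)

lemma stuffle_word_all:
  "is_word u \<Longrightarrow> is_word v \<Longrightarrow> \<forall>w\<in>set (stuffle u v). is_word w"
proof (induction u v rule: stuffle.induct)
  case (1 v) then show ?case by simp
next
  case (2 a u) then show ?case by simp
next
  case (3 a u b v)
  have a: "1 \<le> a" "is_word u" using "3.prems"(1) by (simp_all add: is_word_Cons)
  have b: "1 \<le> b" "is_word v" using "3.prems"(2) by (simp_all add: is_word_Cons)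
  have i1: "\<forall>w\<in>set (stuffle u (b # v)). is_word w" using "3.IH"(1) a b "3.prems" by blast
  have i2: "\<forall>w\<in>set (stuffle (a # u) v). is_word w" using "3.IH"(2) a b "3.prems" by blast
  have i3: "\<forall>w\<in>set (stuffle u v). is_word w" using "3.IH"(3) a b by blast
  show ?case
  proof
    fix w assume "w \<in> set (stuffle (a # u) (b # v))"
    then consider w' where "w = a # w'" "w' \<in> set (stuffle u (b # v))"
      | w' where "w = b # w'" "w' \<in> set (stuffle (a # u) v)"
      | w' where "w = (a + b) # w'" "w' \<in> set (stuffle u v)"
      by (simp only: stuffle.simps set_append set_map) blast
    then show "is_word w"
    proof cases
      case 1 then show ?thesis using i1 a by (simp add: is_word_Cons)
    next
      case 2 then show ?thesis using i2 b by (simp add: is_word_Cons)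
    next
      case 3 then show ?thesis using i3 a by (simp add: is_word_Cons)
    qed
  qed
qed

lemma stuffle_word:
  "is_word u \<Longrightarrow> is_word v \<Longrightarrow> w \<in> set (stuffle u v) \<Longrightarrow> is_word w"
  using stuffle_word_all by blast

lemma stuffle_one_mem: "u @ [1] \<in> set (stuffle u [1])"
  by (induction u) auto

lemma stuffle_one_shape:
  "w \<in> set (stuffle u [1]) \<Longrightarrow>
     w = u @ [1] \<or> length w \<le> length u \<or> (length w = Suc (length u) \<and> trail w \<le> trail u)"
proof (induction u arbitrary: w)
  case Nil
  then show ?case by simp
next
  case (Cons a u)
  have st: "stuffle (a # u) [1] = map (Cons a) (stuffle u [1]) @ [1 # a # u] @ [(a+1) # u]"
    by simp
  from Cons.prems consider (A) w' where "w = a # w'" "w' \<in> set (stuffle u [1])"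
    | (B) "w = 1 # a # u" | (C) "w = (a+1) # u"
    unfolding st by auto
  then show ?case
  proof cases
    case A
    from Cons.IH[OF A(2)] consider "w' = u @ [1]" | "length w' \<le> length u"
      | "length w' = Suc (length u)" "trail w' \<le> trail u" by blast
    then show ?thesis
    proof cases
      case 3
      have "\<exists>y\<in>set w'. y \<noteq> 1"
      proof (rule ccontr)
        assume "\<not> ?thesis"
        then have "trail w' = length w'" by (intro trail_all1) auto
        with 3 trail_le_length[of u] show False by simp
      qed
      then have "trail w = trail w'" using A trail_Cons_not_all by simp
      with 3 trail_Cons_ge[of u a] A show ?thesis by simp
    qed (use A in auto)
  next
    case B
    show ?thesis
    proof (cases "\<forall>y\<in>set (a # u). y = 1")
      case True
      then have eq: "replicate (length (a # u)) 1 = a # u" by (intro replicate_length_same) auto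
      have e2: "1 # a # u = (a # u) @ [1]"
        by (metis eq replicate_append_same)
      show ?thesis by (rule disjI1) (simp only: B e2)
    next
      case False
      then have "trail (1 # a # u) = trail (a # u)" by (intro trail_Cons_not_all) auto
      with B show ?thesis by simp
    qed
  next
    case C then show ?thesis by simp
  qed
qed

definition is_char :: "(nat list \<Rightarrow> complex) \<Rightarrow> bool" where
  "is_char P \<longleftrightarrow> (\<forall>u v. is_word u \<longrightarrow> is_word v \<longrightarrow>
        P u * P v = (\<Sum>w\<leftarrow>stuffle u v. P w))"

definition Tsh :: "complex \<Rightarrow> (nat list \<Rightarrow> complex) \<Rightarrow> nat list \<Rightarrow> complex" where
  "Tsh c P w = P w + (case w of [] \<Rightarrow> 0 | k # u \<Rightarrow> c ^ k * P u)"

lemma Tsh_Nil[simp]: "Tsh c P [] = P []" and Tsh_Cons[simp]: "Tsh c P (k # u) = P (k # u) + c ^ k * P u"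
  by (simp_all add: Tsh_def)

lemma sum_Tsh_map_Cons:
  "(\<Sum>x\<leftarrow>map (Cons a) xs. Tsh c P x) = (\<Sum>x\<leftarrow>map (Cons a) xs. P x) + c ^ a * (\<Sum>x\<leftarrow>xs. P x)"
  by (induction xs) (auto simp: algebra_simps)

lemma sum_Tsh_map_Cons':
  "sum_list (map (Tsh c P \<circ> Cons a) xs) = sum_list (map (P \<circ> Cons a) xs) + c ^ a * sum_list (map P xs)"
  by (induction xs) (auto simp: algebra_simps)

lemma Tsh_char:
  assumes "is_char P" "P [] = 1"
  shows "is_char (Tsh c P)"
  unfolding is_char_def
proof (intro allI impI)
  fix u v :: "nat list" assume u: "is_word u" and v: "is_word v"
  show "Tsh c P u * Tsh c P v = (\<Sum>w\<leftarrow>stuffle u v. Tsh c P w)"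
  proof (cases u)
    case Nil then show ?thesis using assms by simp
  next
    case (Cons a u')
    show ?thesis
    proof (cases v)
      case Nil then show ?thesis using assms \<open>u = a # u'\<close> by simp
    next
      case (Cons b v')
      have w: "is_word u'" "is_word v'" using u v \<open>u = a # u'\<close> Cons by (auto simp: is_word_Cons)
      have e1: "P u * P v = (\<Sum>w\<leftarrow>stuffle u v. P w)" using assms(1) u v by (simp add: is_char_def)
      have e2: "P u' * P v = (\<Sum>w\<leftarrow>stuffle u' v. P w)" using assms(1) w v by (simp add: is_char_def)
      have e3: "P u * P v' = (\<Sum>w\<leftarrow>stuffle u v'. P w)" using assms(1) w u by (simp add: is_char_def)
      have e4: "P u' * P v' = (\<Sum>w\<leftarrow>stuffle u' v'. P w)" using assms(1) w by (simp add: is_char_def)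
      have "(\<Sum>w\<leftarrow>stuffle u v. Tsh c P w) = (\<Sum>w\<leftarrow>stuffle u v. P w)
             + c ^ a * (\<Sum>w\<leftarrow>stuffle u' v. P w) + c ^ b * (\<Sum>w\<leftarrow>stuffle u v'. P w)
             + c ^ (a + b) * (\<Sum>w\<leftarrow>stuffle u' v'. P w)"
        using \<open>u = a # u'\<close> Cons by (simp add: sum_Tsh_map_Cons' algebra_simps)
      also have "\<dots> = Tsh c P u * Tsh c P v"
        unfolding e1[symmetric] e2[symmetric] e3[symmetric] e4[symmetric]
        using \<open>u = a # u'\<close> Cons by (simp add: algebra_simps power_add)
      finally show ?thesis by simp
    qed
  qed
qed

lemma sum_list_single_nonzero:
  assumes "\<forall>x\<in>set xs. x \<noteq> w \<longrightarrow> D x = (0::complex)"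
  shows "(\<Sum>x\<leftarrow>xs. D x) = of_nat (count_list xs w) * D w"
  using assms by (induction xs) (auto simp: algebra_simps)

lemma char_unique:
  assumes P: "is_char P" and Q: "is_char Q" and e0: "P [] = Q []" and e1: "P [1] = Q [1]"
    and ec: "\<forall>w. convergent_word w \<longrightarrow> P w = Q w"
  shows "is_word w \<Longrightarrow> P w = Q w"
proof (induction w rule: wf_induct_rule[OF wf_inv_image[OF wf_lex_prod[OF wf_less_than wf_less_than],
          of "\<lambda>w. (length w, trail w)"]])
  case (1 w)
  note IH = "1.IH"[simplified in_inv_image in_lex_prod less_than_iff]
  show ?case
  proof (cases "w = [] \<or> 2 \<le> last w")
    case True
    then show ?thesis using e0 ec "1.prems" by (auto simp: convergent_word_def)
  next
    case False
    then have wne: "w \<noteq> []" by auto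
    have "1 \<le> last w" using "1.prems" last_in_set[OF wne] by (auto simp: is_word_def)
    then have l: "last w = 1" using False by simp
    define u where "u = butlast w"
    have wu: "w = u @ [1]" using wne l unfolding u_def by (metis append_butlast_last_id)
    show ?thesis
    proof (cases "u = []")
      case True then show ?thesis using wu e1 by simp
    next
      case False
      have uw: "is_word u" using "1.prems" wu by (simp add: is_word_def)
      have Pu: "P u = Q u" using IH uw wu by simp
      have w1: "is_word [1]" by (simp add: is_word_def)
      have "(\<Sum>x\<leftarrow>stuffle u [1]. P x - Q x) = P u * P [1] - Q u * Q [1]"
        using P Q uw w1 by (simp add: is_char_def sum_list_subtractf)
      also have "\<dots> = 0" using Pu e1 by simp
      finally have s0: "(\<Sum>x\<leftarrow>stuffle u [1]. P x - Q x) = 0" .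
      have "\<forall>x\<in>set (stuffle u [1]). x \<noteq> w \<longrightarrow> P x - Q x = 0"
      proof (intro ballI impI)
        fix x assume x: "x \<in> set (stuffle u [1])" "x \<noteq> w"
        have xw: "is_word x" using stuffle_word[OF uw w1 x(1)] .
        from stuffle_one_shape[OF x(1)] x(2) wu trail_snoc1[of u]
        have "length x < length w \<or> length x = length w \<and> trail x < trail w" by auto
        with IH xw show "P x - Q x = 0" by simp
      qed
      from sum_list_single_nonzero[OF this] s0
      have "of_nat (count_list (stuffle u [1]) w) * (P w - Q w) = 0" by simp
      moreover have "count_list (stuffle u [1]) w \<noteq> 0"
        using stuffle_one_mem[of u] wu by (simp add: count_list_0_iff)
      ultimately show ?thesis by simp
    qed
  qed
qed



definition Srt :: "nat \<Rightarrow> nat list set" where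
  "Srt r = {ns. length ns = r \<and> sorted_wrt (<) ns}"

definition hz :: "nat list \<Rightarrow> complex \<Rightarrow> nat list \<Rightarrow> complex" where
  "hz ks z ns = (\<Prod>i<length ks. 1 / (z + of_nat (ns ! i)) ^ (ks ! i))"

lemma hurwitz_eq: "hurwitz_polyzeta ks z = infsum (hz ks z) (Srt (length ks))"
  unfolding hurwitz_polyzeta_def hz_def Srt_def by simp

lemma pos_map:
  assumes "\<forall>x\<in>set ns. 0 < x" "sorted_wrt (<) ns"
  shows "ns = map Suc (map (\<lambda>x. x - 1) ns) \<and> sorted_wrt (<) (map (\<lambda>x. x - 1) ns)"
proof
  show "ns = map Suc (map (\<lambda>x. x - 1) ns)" using assms(1) by (induction ns) auto
  show "sorted_wrt (<) (map (\<lambda>x. x - 1) ns)"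
    unfolding sorted_wrt_map
    by (rule sorted_wrt_mono_rel[OF _ assms(2)]) (use assms(1) in auto)
qed

lemma Srt_Suc:
  "Srt (Suc m) = (\<lambda>ms. 0 # map Suc ms) ` Srt m \<union> map Suc ` Srt (Suc m)"
proof
  show "Srt (Suc m) \<subseteq> (\<lambda>ms. 0 # map Suc ms) ` Srt m \<union> map Suc ` Srt (Suc m)"
  proof
    fix ns assume ns: "ns \<in> Srt (Suc m)"
    then obtain a ns' where ns_eq: "ns = a # ns'" and l: "length ns' = m"
      by (auto simp: Srt_def length_Suc_conv)
    have s: "\<forall>y\<in>set ns'. a < y" "sorted_wrt (<) ns'" using ns ns_eq by (auto simp: Srt_def)
    show "ns \<in> (\<lambda>ms. 0 # map Suc ms) ` Srt m \<union> map Suc ` Srt (Suc m)"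
    proof (cases "a = 0")
      case True
      have p: "\<forall>x\<in>set ns'. 0 < x" using s True by auto
      from pos_map[OF p s(2)] have "ns = 0 # map Suc (map (\<lambda>x. x - 1) ns')"
        "map (\<lambda>x. x - 1) ns' \<in> Srt m" using ns_eq True l by (auto simp: Srt_def)
      then show ?thesis by blast
    next
      case False
      have p: "\<forall>x\<in>set ns. 0 < x" using s False ns_eq by auto
      have s2: "sorted_wrt (<) ns" using ns by (simp add: Srt_def)
      from pos_map[OF p s2] have "ns = map Suc (map (\<lambda>x. x - 1) ns)"
        "map (\<lambda>x. x - 1) ns \<in> Srt (Suc m)" using ns by (auto simp: Srt_def)
      then show ?thesis by blast
    qed
  qed
next
  show "(\<lambda>ms. 0 # map Suc ms) ` Srt m \<union> map Suc ` Srt (Suc m) \<subseteq> Srt (Suc m)"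
    by (auto simp: Srt_def sorted_wrt_map)
qed

lemma Srt_disj: "(\<lambda>ms. 0 # map Suc ms) ` Srt m \<inter> map Suc ` Srt (Suc m) = {}"
  by (auto simp: Srt_def length_Suc_conv)

lemma hz_shift: "length ms = length ks \<Longrightarrow> hz ks (z - 1) (map Suc ms) = hz ks z ms"
  unfolding hz_def by (intro prod.cong refl) (simp add: algebra_simps)

lemma hz_head:
  "length ms = length u \<Longrightarrow> hz (k # u) (z - 1) (0 # map Suc ms) = (1 / (z - 1)) ^ k * hz u z ms"
  unfolding hz_def
  by (simp add: prod.lessThan_Suc_shift power_one_over algebra_simps del: prod.lessThan_Suc)



lemma prod_list_nth: "prod_list (map g ns) = (\<Prod>i<length ns. g (ns ! i))"
  by (induction ns) (simp_all add: prod.lessThan_Suc_shift del: prod.lessThan_Suc)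

lemma lists_len_Suc:
  "{ns::nat list. length ns = Suc r} = (\<lambda>(n, ns). n # ns) ` (UNIV \<times> {ns. length ns = r})"
  by (auto simp: length_Suc_conv)

lemma prodlist_summable:
  fixes g :: "nat \<Rightarrow> real"
  assumes g0: "\<And>n. g n \<ge> 0" and gs: "g summable_on UNIV"
  shows "(\<lambda>ns. prod_list (map g ns)) summable_on {ns::nat list. length ns = r}"
proof (induction r)
  case 0
  have "{ns::nat list. length ns = 0} = {[]}" by auto
  then show ?case by simp
next
  case (Suc r)
  define S where "S = infsum (\<lambda>ns. prod_list (map g ns)) {ns::nat list. length ns = r}"
  have inj: "inj_on (\<lambda>(n, ns). n # ns) (UNIV \<times> {ns::nat list. length ns = r})"
    by (auto simp: inj_on_def)
  have "((\<lambda>ns. prod_list (map g ns)) \<circ> (\<lambda>(n, ns). n # ns)) summable_on (UNIV \<times> {ns::nat list. length ns = r})"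
  proof (rule summable_on_SigmaI[where g = "\<lambda>n. g n * S"])
    fix n :: nat
    show "((\<lambda>y. ((\<lambda>ns. prod_list (map g ns)) \<circ> (\<lambda>(n, ns). n # ns)) (n, y)) has_sum g n * S)
            {ns::nat list. length ns = r}"
      using has_sum_cmult_right[OF has_sum_infsum[OF Suc.IH], of "g n"] by (simp add: S_def)
  next
    show "(\<lambda>n. g n * S) summable_on UNIV" using gs by (rule summable_on_cmult_left)
  next
    fix n :: nat and y :: "nat list"
    show "0 \<le> ((\<lambda>ns. prod_list (map g ns)) \<circ> (\<lambda>(n, ns). n # ns)) (n, y)"
      using g0 by (auto intro!: mult_nonneg_nonneg prod_list_nonneg)
  qed
  then show ?case unfolding lists_len_Suc summable_on_reindex[OF inj] .
qed

lemma delta_bound: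
  fixes w :: complex
  assumes "w \<notin> \<int>\<^sub>\<le>\<^sub>0"
  shows "\<exists>\<delta>>0. \<delta> \<le> 1 \<and> (\<forall>n. \<delta> * (real n + 1) \<le> norm (w + of_nat n))"
proof -
  define N where "N = nat \<lceil>2 * norm w\<rceil> + 1"
  have N1: "N \<ge> 1" and N2: "real N \<ge> 2 * norm w" unfolding N_def by linarith+
  define f where "f n = norm (w + of_nat n) / (real n + 1)" for n
  have fpos: "f n > 0" for n
  proof -
    have "w + of_nat n \<noteq> 0"
    proof
      assume "w + of_nat n = 0"
      then have "w = - of_nat n" by (simp add: algebra_simps eq_neg_iff_add_eq_0)
      with assms show False by simp
    qed
    then show ?thesis unfolding f_def by simp
  qed
  define \<delta>0 where "\<delta>0 = Min (f ` {..<N})"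
  have fin: "finite (f ` {..<N})" "f ` {..<N} \<noteq> {}" using N1 by (auto simp: lessThan_empty_iff)
  have d0: "\<delta>0 > 0" unfolding \<delta>0_def using fin fpos by (subst Min_gr_iff) auto
  define \<delta> where "\<delta> = min (1/4) \<delta>0"
  have "\<delta> * (real n + 1) \<le> norm (w + of_nat n)" for n
  proof (cases "n < N")
    case True
    have "\<delta> \<le> f n" unfolding \<delta>_def \<delta>0_def using fin True by (simp add: min.coboundedI2)
    then have "\<delta> * (real n + 1) \<le> f n * (real n + 1)" by (intro mult_right_mono) auto
    also have "\<dots> = norm (w + of_nat n)" unfolding f_def by simp
    finally show ?thesis .
  next
    case False
    have r1: "real n \<le> norm (w + of_nat n) + norm w"
      using norm_triangle_ineq4[of "w + of_nat n" w] by (simp add: norm_of_nat)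
    have r2: "real n \<ge> real N" using False by simp
    have r3: "real N \<ge> 1" using N1 by simp
    have d1: "\<delta> \<le> 1/4" unfolding \<delta>_def by simp
    have d2: "\<delta> \<ge> 0" unfolding \<delta>_def using d0 by simp
    have h: "real n + 1 \<le> 4 * norm (w + of_nat n)" using r1 r2 r3 N2 by linarith
    have "\<delta> * (real n + 1) \<le> \<delta> * (4 * norm (w + of_nat n))" using h d2 by (rule mult_left_mono)
    also have "\<dots> = (4 * \<delta>) * norm (w + of_nat n)" by simp
    also have "\<dots> \<le> 1 * norm (w + of_nat n)" using d1 by (intro mult_right_mono) auto
    finally show ?thesis by simp
  qed
  moreover have "\<delta> > 0" "\<delta> \<le> 1" unfolding \<delta>_def using d0 by auto
  ultimately show ?thesis by blast
qed



lemma key_bound: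
  assumes l: "length ns = length ks" and s: "sorted_wrt (<) ns" and cw: "convergent_word ks"
  shows "(\<Prod>i<length ks. 1 / (real (ns ! i) + 1) ^ (ks ! i))
         \<le> (\<Prod>i<length ks. (real (ns ! i) + 1) powr (- (1 + 1 / real (length ks))))"
proof -
  obtain m where r: "length ks = Suc m" using cw by (cases ks) (auto simp: convergent_word_def)
  define a where "a i = real (ns ! i) + 1" for i
  define M where "M = a m"
  define q where "q = 1 / real (Suc m)"
  have a1: "a i \<ge> 1" for i unfolding a_def by simp
  have a0: "a i > 0" for i using a1[of i] by simp
  have aM: "a i \<le> M" if "i < Suc m" for i
  proof (cases "i = m")
    case True then show ?thesis by (simp add: M_def)
  next
    case False
    then have "ns ! i < ns ! m" using that l r by (intro sorted_wrt_nth_less[OF s]) auto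
    then show ?thesis unfolding M_def a_def by simp
  qed
  have k1: "1 \<le> ks ! i" if "i < Suc m" for i
    using cw that r nth_mem[of i ks] by (auto simp: convergent_word_def is_word_def)
  have k2: "2 \<le> ks ! m" using cw r last_conv_nth[of ks] by (auto simp: convergent_word_def)
  define P where "P = (\<Prod>i<Suc m. a i)"
  have P0: "P > 0" unfolding P_def using a0 by (intro prod_pos) auto
  have "(\<Prod>i<Suc m. a i powr (1 + q)) = (\<Prod>i<Suc m. a i * a i powr q)"
    using a0 by (intro prod.cong refl) (simp add: powr_add abs_of_pos less_imp_le)
  also have "\<dots> = P * (\<Prod>i<Suc m. a i powr q)" unfolding P_def by (simp add: prod.distrib)
  also have "(\<Prod>i<Suc m. a i powr q) \<le> (\<Prod>i<Suc m. M powr q)"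
    using a0 aM by (intro prod_mono conjI powr_mono2) (auto simp: q_def intro: less_imp_le)
  also have "(\<Prod>i<Suc m. M powr q) = M"
  proof -
    have "M > 0" using a0 by (simp add: M_def)
    have "(\<Prod>i<Suc m. M powr q) = (M powr q) ^ card {..<Suc m}" by (rule prod_constant)
    also have "\<dots> = (M powr q) ^ (Suc m)" by (simp only: card_lessThan)
    also have "\<dots> = M powr (real (Suc m) * q)" using \<open>M > 0\<close> by (intro powr_power) simp
    finally have "(\<Prod>i<Suc m. M powr q) = M powr (real (Suc m) * q)" .
    also have "\<dots> = M" using \<open>M > 0\<close> by (simp add: q_def)
    finally show ?thesis .
  qed
  finally have up: "(\<Prod>i<Suc m. a i powr (1 + q)) \<le> P * M" using P0 by simp
  have "P * M = (\<Prod>i<m. a i) * (a m * a m)" unfolding P_def M_def by simp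
  also have "\<dots> \<le> (\<Prod>i<m. a i ^ (ks ! i)) * a m ^ (ks ! m)"
  proof (rule mult_mono)
    show "(\<Prod>i<m. a i) \<le> (\<Prod>i<m. a i ^ (ks ! i))"
    proof (rule prod_mono)
      fix i assume "i \<in> {..<m}"
      then have "a i ^ 1 \<le> a i ^ (ks ! i)" using k1[of i] a1[of i] by (intro power_increasing) auto
      then show "0 \<le> a i \<and> a i \<le> a i ^ (ks ! i)" using a0[of i] by simp
    qed
    have "a m ^ 2 \<le> a m ^ (ks ! m)" using k2 a1[of m] by (intro power_increasing) auto
    then show "a m * a m \<le> a m ^ (ks ! m)" by (simp add: power2_eq_square)
  next
    show "0 \<le> a m * a m" using a0[of m] by simp
  next
    show "0 \<le> (\<Prod>i<m. a i ^ (ks ! i))" using a0 by (intro prod_nonneg) (simp add: less_imp_le)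
  qed
  also have "\<dots> = (\<Prod>i<Suc m. a i ^ (ks ! i))" by simp
  finally have lo: "P * M \<le> (\<Prod>i<Suc m. a i ^ (ks ! i))" .
  have pos: "(\<Prod>i<Suc m. a i powr (1 + q)) > 0" using a0 by (intro prod_pos) (metis powr_gt_zero less_irrefl)
  have "(\<Prod>i<Suc m. 1 / a i ^ (ks ! i)) = 1 / (\<Prod>i<Suc m. a i ^ (ks ! i))"
    by (simp add: prod_dividef del: prod.lessThan_Suc)
  also have "\<dots> \<le> 1 / (\<Prod>i<Suc m. a i powr (1 + q))"
    using up lo pos by (intro divide_left_mono) auto
  also have "\<dots> = (\<Prod>i<Suc m. 1 / a i powr (1 + q))"
    by (simp add: prod_dividef del: prod.lessThan_Suc)
  also have "\<dots> = (\<Prod>i<Suc m. a i powr (- (1 + q)))"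
    by (intro prod.cong refl) (rule powr_minus_divide[symmetric])
  finally show ?thesis unfolding r a_def q_def by simp
qed



lemma hz_summable:
  assumes cw: "convergent_word ks" and w: "w \<notin> \<int>\<^sub>\<le>\<^sub>0"
  shows "hz ks w summable_on Srt (length ks)"
proof -
  obtain \<delta> where d: "\<delta> > 0" "\<delta> \<le> 1" "\<And>n. \<delta> * (real n + 1) \<le> norm (w + of_nat n)"
    using delta_bound[OF w] by blast
  define r where "r = length ks"
  have r1: "r \<ge> 1" using cw by (cases ks) (auto simp: convergent_word_def r_def)
  define p where "p = 1 + 1 / real r"
  define g where "g n = (real n + 1) powr (- p)" for n
  have g0: "g n \<ge> 0" for n unfolding g_def by simp
  have "summable (\<lambda>n. real n powr (- p))" using r1 by (subst summable_real_powr_iff) (simp add: p_def)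
  then have "summable (\<lambda>n. real (Suc n) powr (- p))" by (subst summable_Suc_iff)
  then have "summable g" unfolding g_def by (simp add: add.commute)
  then have gs: "g summable_on UNIV" using g0 by (subst summable_on_UNIV_nonneg_real_iff) auto
  define C where "C = (\<Prod>i<r. (1 / \<delta>) ^ (ks ! i))"
  have C0: "C \<ge> 0" unfolding C_def using d by (intro prod_nonneg) simp
  have "(\<lambda>ns. C * prod_list (map g ns)) summable_on {ns::nat list. length ns = r}"
    by (intro summable_on_cmult_right prodlist_summable g0 gs)
  then have S: "(\<lambda>ns. C * prod_list (map g ns)) summable_on Srt r"
    by (rule summable_on_subset_banach) (auto simp: Srt_def)
  have bound: "norm (hz ks w ns) \<le> C * prod_list (map g ns)" if ns: "ns \<in> Srt r" for ns
  proof -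
    have l: "length ns = length ks" and s: "sorted_wrt (<) ns" using ns by (auto simp: Srt_def r_def)
    have "norm (hz ks w ns) = (\<Prod>i<r. 1 / norm (w + of_nat (ns ! i)) ^ (ks ! i))"
      unfolding hz_def r_def by (simp add: prod_norm[symmetric] norm_divide norm_power)
    also have "\<dots> \<le> (\<Prod>i<r. (1 / \<delta>) ^ (ks ! i) * (1 / (real (ns ! i) + 1) ^ (ks ! i)))"
    proof (rule prod_mono)
      fix i assume "i \<in> {..<r}"
      have pos: "\<delta> * (real (ns ! i) + 1) > 0" using d(1) by simp
      have "1 / norm (w + of_nat (ns ! i)) ^ (ks ! i) \<le> 1 / (\<delta> * (real (ns ! i) + 1)) ^ (ks ! i)"
      proof -
        have hN: "\<delta> * (real (ns ! i) + 1) \<le> norm (w + of_nat (ns ! i))" by (rule d(3))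
        have np: "norm (w + of_nat (ns ! i)) > 0" using pos hN by linarith
        show ?thesis
          by (rule divide_left_mono) (use pos hN np in \<open>auto intro!: power_mono mult_pos_pos zero_less_power\<close>)
      qed
      also have "\<dots> = (1 / \<delta>) ^ (ks ! i) * (1 / (real (ns ! i) + 1) ^ (ks ! i))"
        by (simp add: power_mult_distrib power_one_over)
      finally show "0 \<le> 1 / norm (w + of_nat (ns ! i)) ^ (ks ! i) \<and>
          1 / norm (w + of_nat (ns ! i)) ^ (ks ! i) \<le> (1 / \<delta>) ^ (ks ! i) * (1 / (real (ns ! i) + 1) ^ (ks ! i))"
        by simp
    qed
    also have "\<dots> = C * (\<Prod>i<r. 1 / (real (ns ! i) + 1) ^ (ks ! i))"
      unfolding C_def by (rule prod.distrib)
    also have "\<dots> \<le> C * (\<Prod>i<r. g (ns ! i))"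
      using key_bound[OF l s cw] C0 unfolding g_def p_def r_def by (intro mult_left_mono) auto
    also have "(\<Prod>i<r. g (ns ! i)) = prod_list (map g ns)"
      using l by (simp add: prod_list_nth r_def)
    finally show ?thesis .
  qed
  have "(\<lambda>ns. norm (hz ks w ns)) summable_on Srt r"
    by (rule summable_on_comparison_test[OF S]) (use bound in auto)
  then show ?thesis unfolding r_def by (subst summable_on_iff_abs_summable_on_complex)
qed

lemma hurwitz_shift:
  assumes cw: "convergent_word (k # u)" and w: "z - 1 \<notin> \<int>\<^sub>\<le>\<^sub>0"
  shows "hurwitz_polyzeta (k # u) (z - 1)
         = hurwitz_polyzeta (k # u) z + (1 / (z - 1)) ^ k * hurwitz_polyzeta u z"
proof -
  define m where "m = length u"
  define A0 where "A0 = (\<lambda>ms. 0 # map Suc ms) ` Srt m"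
  define A1 where "A1 = map Suc ` Srt (Suc m)"
  have sm: "hz (k # u) (z - 1) summable_on Srt (Suc m)"
    using hz_summable[OF cw w] by (simp add: m_def)
  have SU: "Srt (Suc m) = A0 \<union> A1" unfolding A0_def A1_def by (rule Srt_Suc)
  have s0: "hz (k # u) (z - 1) summable_on A0"
    using sm by (rule summable_on_subset_banach) (simp add: SU)
  have s1: "hz (k # u) (z - 1) summable_on A1"
    using sm by (rule summable_on_subset_banach) (simp add: SU)
  have inj0: "inj_on (\<lambda>ms. 0 # map Suc ms) (Srt m)" by (auto simp: inj_on_def)
  have inj1: "inj_on (map Suc) (Srt (Suc m))" by (auto simp: inj_on_def)
  have "hurwitz_polyzeta (k # u) (z - 1) = infsum (hz (k # u) (z - 1)) (A0 \<union> A1)"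
    using SU by (simp add: hurwitz_eq m_def)
  also have "\<dots> = infsum (hz (k # u) (z - 1)) A0 + infsum (hz (k # u) (z - 1)) A1"
    by (rule infsum_Un_disjoint[OF s0 s1]) (simp add: A0_def A1_def Srt_disj)
  also have "infsum (hz (k # u) (z - 1)) A1 = infsum (hz (k # u) z) (Srt (Suc m))"
    unfolding A1_def infsum_reindex[OF inj1]
    by (intro infsum_cong) (simp add: hz_shift Srt_def m_def)
  also have "\<dots> = hurwitz_polyzeta (k # u) z" by (simp add: hurwitz_eq m_def)
  also have "infsum (hz (k # u) (z - 1)) A0 = infsum (\<lambda>ms. (1 / (z - 1)) ^ k * hz u z ms) (Srt m)"
    unfolding A0_def infsum_reindex[OF inj0]
    by (intro infsum_cong) (simp add: hz_head Srt_def m_def)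
  also have "\<dots> = (1 / (z - 1)) ^ k * hurwitz_polyzeta u z"
    by (simp add: infsum_cmult_right' hurwitz_eq m_def)
  finally show ?thesis by simp
qed



lemma hurwitz_Nil: "hurwitz_polyzeta [] z = 1"
proof -
  have "{ns :: nat list. length ns = length ([] :: nat list) \<and> sorted_wrt (<) ns} = {[]}" by auto
  then show ?thesis unfolding hurwitz_polyzeta_def by simp
qed

lemma nc_Nil: "Y [] = 0 \<Longrightarrow> nc_mult Y G [] = 0"
  by (simp add: nc_mult_def)

lemma nc_Cons:
  assumes Y0: "Y [] = 0" and Y2: "\<And>a b v. Y (a # b # v) = 0"
  shows "nc_mult Y G (k # u) = Y [k] * G u"
proof -
  define f where "f i = Y (take i (k # u)) * G (drop i (k # u))" for i
  have fin: "finite {..length (k # u)}" by simp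
  have one: "(1::nat) \<in> {..length (k # u)}" by simp
  have "nc_mult Y G (k # u) = sum f {..length (k # u)}" by (simp add: nc_mult_def f_def)
  also have "\<dots> = f 1 + sum f ({..length (k # u)} - {1})" by (rule sum.remove[OF fin one])
  also have "sum f ({..length (k # u)} - {1}) = 0"
  proof (rule sum.neutral, rule ballI)
    fix i assume i: "i \<in> {..length (k # u)} - {1}"
    show "f i = 0"
    proof (cases i)
      case 0 then show ?thesis by (simp add: f_def Y0)
    next
      case (Suc j)
      with i obtain j' where j': "j = Suc j'" by (cases j) auto
      with i Suc have "u \<noteq> []" by auto
      then obtain b v where "u = b # v" by (cases u) auto
      then show ?thesis using Suc j' by (simp add: f_def Y2)
    qed
  qed
  finally show ?thesis by (simp add: f_def)
qed

theorem theoremA: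
  fixes F :: "nat list \<Rightarrow> complex \<Rightarrow> complex" and z :: complex
  assumes "is_hurwitz_stuffle_hom F"
    and "z \<notin> \<int>\<^sub>\<le>\<^sub>0" and "z - 1 \<notin> \<int>\<^sub>\<le>\<^sub>0"
  shows "\<forall>w. is_word w \<longrightarrow>
           D_minus (H_series F) z w = nc_mult (Ycoef_series z) (H_series F z) w"
proof (intro allI impI)
  fix w :: "nat list" assume ww: "is_word w"
  define P where "P = (\<lambda>v. F v z)"
  define Q where "Q = (\<lambda>v. F v (z - 1))"
  define c where "c = 1 / (z - 1)"
  have h1: "F [] z = 1" "F [1] z = - deriv Gamma z / Gamma z"
    "\<And>v. convergent_word v \<Longrightarrow> F v z = hurwitz_polyzeta v z"
    "\<And>u v. is_word u \<Longrightarrow> is_word v \<Longrightarrow> F u z * F v z = (\<Sum>w\<leftarrow>stuffle u v. F w z)"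
    using assms(1,2) unfolding is_hurwitz_stuffle_hom_def by blast+
  have h2: "F [] (z - 1) = 1" "F [1] (z - 1) = - deriv Gamma (z - 1) / Gamma (z - 1)"
    "\<And>v. convergent_word v \<Longrightarrow> F v (z - 1) = hurwitz_polyzeta v (z - 1)"
    "\<And>u v. is_word u \<Longrightarrow> is_word v \<Longrightarrow> F u (z - 1) * F v (z - 1) = (\<Sum>w\<leftarrow>stuffle u v. F w (z - 1))"
    using assms(1,3) unfolding is_hurwitz_stuffle_hom_def by blast+
  have cP: "is_char P" unfolding is_char_def P_def using h1(4) by blast
  have cQ: "is_char Q" unfolding is_char_def Q_def using h2(4) by blast
  have cT: "is_char (Tsh c P)" by (rule Tsh_char[OF cP]) (simp add: P_def h1(1))
  have z1: "z - 1 \<noteq> 0" using assms(3) by auto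
  have dg: "deriv Gamma x = Gamma x * Digamma x" if "x \<notin> \<int>\<^sub>\<le>\<^sub>0" for x :: complex
    by (rule DERIV_imp_deriv[OF has_field_derivative_Gamma[OF that]])
  have "Digamma (z - 1 + 1) = Digamma (z - 1) + 1 / (z - 1)" by (rule Digamma_plus1[OF z1])
  then have dz: "Digamma z = Digamma (z - 1) + 1 / (z - 1)" by simp
  have q1: "Q [1] = - Digamma (z - 1)"
    unfolding Q_def h2(2) dg[OF assms(3)] using Gamma_nonzero[OF assms(3)] by simp
  have t1: "Tsh c P [1] = - Digamma z + c"
    unfolding Tsh_Cons P_def h1(2) dg[OF assms(2)] using Gamma_nonzero[OF assms(2)] by (simp add: h1(1))
  have e1: "Q [1] = Tsh c P [1]" unfolding q1 t1 by (simp add: dz c_def)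
  have e0: "Q [] = Tsh c P []" by (simp add: Q_def P_def h1(1) h2(1))
  have ec: "\<forall>v. convergent_word v \<longrightarrow> Q v = Tsh c P v"
  proof (intro allI impI)
    fix v assume cv: "convergent_word v"
    then obtain k u where v: "v = k # u" by (cases v) (auto simp: convergent_word_def)
    have Pu: "P u = hurwitz_polyzeta u z"
    proof (cases "u = []")
      case True then show ?thesis by (simp add: P_def h1(1) hurwitz_Nil)
    next
      case False
      then have "convergent_word u" using cv v by (auto simp: convergent_word_def is_word_def)
      then show ?thesis by (simp add: P_def h1(3))
    qed
    have "Q v = hurwitz_polyzeta (k # u) z + (1 / (z - 1)) ^ k * hurwitz_polyzeta u z"
      using hurwitz_shift[OF cv[unfolded v] assms(3)] h2(3)[OF cv] v by (simp add: Q_def)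
    also have "\<dots> = Tsh c P v" using Pu v h1(3)[OF cv] by (simp add: P_def c_def)
    finally show "Q v = Tsh c P v" .
  qed
  have eq: "Q w = Tsh c P w" by (rule char_unique[OF cQ cT e0 e1 ec ww])
  show "D_minus (H_series F) z w = nc_mult (Ycoef_series z) (H_series F z) w"
  proof (cases w)
    case Nil
    then show ?thesis by (simp add: D_minus_def H_series_def nc_Nil Ycoef_series_def h1(1) h2(1))
  next
    case (Cons k u)
    have k1: "1 \<le> k" using ww Cons by (simp add: is_word_def)
    have "nc_mult (Ycoef_series z) (H_series F z) w = Ycoef_series z [k] * F u z"
      unfolding Cons by (subst nc_Cons) (auto simp: Ycoef_series_def H_series_def)
    also have "\<dots> = - (c ^ k * P u)" using k1 by (simp add: Ycoef_series_def c_def P_def power_one_over)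
    also have "\<dots> = D_minus (H_series F) z w"
      using eq Cons by (simp add: D_minus_def H_series_def P_def Q_def)
    finally show ?thesis by simp
  qed
qed

end
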